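(* Let $X,Y$ be compact metric spaces and let $\mathcal G\subset\mathrm{Homeo}(X)$, $\mathcal H\subset\mathrm{Homeo}(Y)$ be finitely generated pseudogroups strongly isomorphic via a homeomorphism $\varphi:X\to Y$; let $\mathcal G_1$ be a finite generating set of $\mathcal G$ and $\mathcal H_1=\{\varphi\circ g\circ\varphi^{-1}:g\in\mathcal G_1\}$. If a Borel probability measure $\mu$ on $X$ is $(\mathcal G,\mathcal G_1)$-expansive with some constant $\eta>0$, then there exists $\delta>0$ such that $\varphi_*\mu$ is $(\mathcal H,\mathcal H_1)$-expansive with constant $\delta$.
   Context: $\mathrm{Homeo}(X)$: homeomorphisms $g:D_g\to R_g$ between open subsets of $X$, composed on natural domains $D_{h\circ g}=g^{-1}(D_h)$. A pseudogroup is a subset of $\mathrm{Homeo}(X)$ containing $\mathrm{id}_X$, closed under composition, inversion, restriction to open subsets, and gluing along open covers of the domain; $\Gamma$ generates $\mathcal G$ if $\bigcup_{g\in\Gamma}(D_g\cup R_g)=X$ and $\mathcal G$ is exactly the set of $g\in\mathrm{Homeo}(X)$ locally equal near each point of $D_g$ to a finite composition of elements of $\Gamma$ and their inverses. $\mathcal G,\mathcal H$ are strongly isomorphic via $\varphi$ if for every $f\in\mathrm{Homeo}(X)$: $\varphi\circ f\circ\varphi^{-1}\in\mathcal H$ iff $f\in\mathcal G$. For a pseudogroup with finite generating set $\Gamma$: $\Gamma_n=\{g_1\circ\cdots\circ g_n:g_i\in\Gamma\}$, $\Gamma_n^x=\{g\in\Gamma_n:x\in D_g\}$, $\Phi_\delta(x)=\{y: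 d(g(x),g(y))\le\delta\ \forall n\in\mathbb N,\ \forall g\in\Gamma_n^x\cap\Gamma_n^y\}$. A Borel probability measure $\mu$ is expansive with constant $\delta$ for $(\mathcal G,\Gamma)$ if $\mu(\Phi_\delta(x))=0$ for every point $x$. $\varphi_*\mu=\mu\circ\varphi^{-1}$. *)

theory Defs
  imports "HOL-Probability.Probability"
begin

text \<open>Elements of Homeo(X) are represented as partial maps 'a \<rightharpoonup> 'a:
  the domain D_g is dom g, the range R_g is ran g.\<close>

type_synonym 'a pmap = "'a \<Rightarrow> 'a option"

definition pfun :: "'a pmap \<Rightarrow> 'a \<Rightarrow> 'a" where
  "pfun g x = the (g x)"

definition is_phomeo :: "('a::topological_space) pmap \<Rightarrow> bool" where
  "is_phomeo g \<longleftrightarrow> open (dom g) \<and> open (ran g) \<and>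
     (\<exists>h. homeomorphism (dom g) (ran g) (pfun g) h)"

definition Homeo :: "('a::topological_space) pmap set" where
  "Homeo = {g. is_phomeo g}"

text \<open>Composition on natural domains: D_{h o g} = g^{-1}(D_h); this is map_comp.\<close>

definition pinv :: "'a pmap \<Rightarrow> 'a pmap" where
  "pinv g = (\<lambda>y. if y \<in> ran g then Some (inv_into (dom g) (pfun g) y) else None)"

definition pid :: "'a pmap" where
  "pid = (\<lambda>x. Some x)"

fun comp_list :: "'a pmap list \<Rightarrow> 'a pmap" where
  "comp_list [] = pid"
| "comp_list (g # gs) = g \<circ>\<^sub>m comp_list gs"

definition is_pseudogroup :: "('a::topological_space) pmap set \<Rightarrow> bool" where
  "is_pseudogroup G \<longleftrightarrow> G \<subseteq> Homeo \<and> pid \<in> G \<and>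
     (\<forall>g\<in>G. \<forall>h\<in>G. h \<circ>\<^sub>m g \<in> G) \<and>
     (\<forall>g\<in>G. pinv g \<in> G) \<and>
     (\<forall>g\<in>G. \<forall>U. open U \<longrightarrow> g |` U \<in> G) \<and>
     (\<forall>g\<in>Homeo. (\<forall>x\<in>dom g. \<exists>U. open U \<and> x \<in> U \<and> g |` U \<in> G) \<longrightarrow> g \<in> G)"

definition generated_pg :: "('a::topological_space) pmap set \<Rightarrow> 'a pmap set" where
  "generated_pg \<Gamma> = {g \<in> Homeo. \<forall>x\<in>dom g. \<exists>U ws. open U \<and> x \<in> U \<and> U \<subseteq> dom g \<and>
       set ws \<subseteq> \<Gamma> \<union> pinv ` \<Gamma> \<and> U \<subseteq> dom (comp_list ws) \<and>
       (\<forall>y\<in>U. g y = comp_list ws y)}"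

definition generates :: "('a::topological_space) pmap set \<Rightarrow> 'a pmap set \<Rightarrow> bool" where
  "generates \<Gamma> G \<longleftrightarrow> \<Gamma> \<subseteq> Homeo \<and> (\<Union>g\<in>\<Gamma>. dom g \<union> ran g) = UNIV \<and> G = generated_pg \<Gamma>"

definition fin_gen_pseudogroup :: "('a::topological_space) pmap set \<Rightarrow> bool" where
  "fin_gen_pseudogroup G \<longleftrightarrow> is_pseudogroup G \<and> (\<exists>\<Gamma>. finite \<Gamma> \<and> generates \<Gamma> G)"

text \<open>Conjugation \<phi> o f o \<phi>^{-1}, where \<psi> is the inverse of the homeomorphism \<phi>.\<close>
definition conj_pmap :: "('a \<Rightarrow> 'b) \<Rightarrow> ('b \<Rightarrow> 'a) \<Rightarrow> 'a pmap \<Rightarrow> 'b pmap" where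
  "conj_pmap \<phi> \<psi> f = (\<lambda>y. map_option \<phi> (f (\<psi> y)))"

definition strongly_isomorphic ::
  "('a::topological_space) pmap set \<Rightarrow> ('b::topological_space) pmap set \<Rightarrow> ('a \<Rightarrow> 'b) \<Rightarrow> bool" where
  "strongly_isomorphic G H \<phi> \<longleftrightarrow> homeomorphism UNIV UNIV \<phi> (inv \<phi>) \<and>
     (\<forall>f\<in>Homeo. conj_pmap \<phi> (inv \<phi>) f \<in> H \<longleftrightarrow> f \<in> G)"

definition Gamma_n :: "'a pmap set \<Rightarrow> nat \<Rightarrow> 'a pmap set" where
  "Gamma_n \<Gamma> n = {comp_list gs | gs. length gs = n \<and> set gs \<subseteq> \<Gamma>}"

definition Phi :: "('a::metric_space) pmap set \<Rightarrow> real \<Rightarrow> 'a \<Rightarrow> 'a set" where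
  "Phi \<Gamma> \<delta> x = {y. \<forall>n\<ge>1. \<forall>g\<in>Gamma_n \<Gamma> n. x \<in> dom g \<and> y \<in> dom g \<longrightarrow>
                      dist (pfun g x) (pfun g y) \<le> \<delta>}"

definition expansive_measure :: "('a::metric_space) measure \<Rightarrow> 'a pmap set \<Rightarrow> real \<Rightarrow> bool" where
  "expansive_measure \<mu> \<Gamma> \<delta> \<longleftrightarrow> (\<forall>x. Phi \<Gamma> \<delta> x \<in> null_sets \<mu>)"

end

theory Submission
  imports Defs
begin

lemma comp_list_props:
  fixes gs :: "('a::topological_space) pmap list"
  assumes "set gs \<subseteq> Homeo"
  shows "open (dom (comp_list gs)) \<and> continuous_on (dom (comp_list gs)) (pfun (comp_list gs))"
  using assms
proof (induction gs)
  case Nil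
  have e: "pfun pid = id" by (auto simp: pfun_def pid_def)
  have "continuous_on UNIV (pfun pid)" unfolding e by (simp add: continuous_on_id')
  moreover have "dom (pid :: 'a pmap) = UNIV" by (simp add: pid_def)
  ultimately show ?case by simp
next
  case (Cons f gs)
  let ?g = "comp_list gs"
  from Cons have IH: "open (dom ?g)" "continuous_on (dom ?g) (pfun ?g)" by auto
  from Cons have "is_phomeo f" by (auto simp: Homeo_def)
  then obtain h where of: "open (dom f)" and hf: "homeomorphism (dom f) (ran f) (pfun f) h"
    by (auto simp: is_phomeo_def)
  have cf: "continuous_on (dom f) (pfun f)" using hf by (simp add: homeomorphism_def)
  have D: "dom (f \<circ>\<^sub>m ?g) = dom ?g \<inter> pfun ?g -` dom f"
    by (auto simp: map_comp_def pfun_def split: option.splits)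
  have "open (pfun ?g -` dom f \<inter> dom ?g)"
    using iffD1[OF continuous_on_open_vimage[OF IH(1)] IH(2)] of by blast
  then have o: "open (dom (f \<circ>\<^sub>m ?g))" unfolding D by (simp add: Int_commute)
  have "continuous_on (dom (f \<circ>\<^sub>m ?g)) (pfun f \<circ> pfun ?g)"
    unfolding D
    by (rule continuous_on_compose) (auto intro: continuous_on_subset[OF IH(2)] continuous_on_subset[OF cf])
  moreover have "\<forall>x\<in>dom (f \<circ>\<^sub>m ?g). (pfun f \<circ> pfun ?g) x = pfun (f \<circ>\<^sub>m ?g) x"
    by (auto simp: map_comp_def pfun_def split: option.splits)
  ultimately have "continuous_on (dom (f \<circ>\<^sub>m ?g)) (pfun (f \<circ>\<^sub>m ?g))"
    using continuous_on_cong by fastforce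
  with o show ?case by simp
qed

lemma conj_map_comp:
  assumes "\<And>x. \<psi> (\<phi> x) = x"
  shows "conj_pmap \<phi> \<psi> f \<circ>\<^sub>m conj_pmap \<phi> \<psi> g = conj_pmap \<phi> \<psi> (f \<circ>\<^sub>m g)"
  by (rule ext) (auto simp: conj_pmap_def map_comp_def assms split: option.splits)

lemma conj_comp_list:
  assumes "\<And>x. \<psi> (\<phi> x) = x" "\<And>y. \<phi> (\<psi> y) = y"
  shows "comp_list (map (conj_pmap \<phi> \<psi>) gs) = conj_pmap \<phi> \<psi> (comp_list gs)"
proof (induction gs)
  case Nil
  then show ?case using assms by (auto simp: conj_pmap_def pid_def)
next
  case (Cons f gs)
  show ?case using Cons conj_map_comp[of \<psi> \<phi>] assms by simp
qed

lemma closed_Phi: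
  fixes \<Gamma> :: "('a::metric_space) pmap set"
  assumes "\<Gamma> \<subseteq> Homeo"
  shows "closed (Phi \<Gamma> \<delta> x)"
proof -
  have eq: "Phi \<Gamma> \<delta> x = (\<Inter>n\<in>{1..}. \<Inter>g\<in>Gamma_n \<Gamma> n.
              {y. x \<in> dom g \<and> y \<in> dom g \<longrightarrow> dist (pfun g x) (pfun g y) \<le> \<delta>})"
    by (auto simp: Phi_def)
  have "closed {y. x \<in> dom g \<and> y \<in> dom g \<longrightarrow> dist (pfun g x) (pfun g y) \<le> \<delta>}"
    if "g \<in> Gamma_n \<Gamma> n" for g n
  proof (cases "x \<in> dom g")
    case False then show ?thesis by simp
  next
    case True
    from that obtain gs where g: "g = comp_list gs" "set gs \<subseteq> \<Gamma>" by (auto simp: Gamma_n_def)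
    then have P: "open (dom g)" "continuous_on (dom g) (pfun g)"
      using comp_list_props[of gs] assms by auto
    have "open (pfun g -` (- cball (pfun g x) \<delta>) \<inter> dom g)"
      using iffD1[OF continuous_on_open_vimage[OF P(1)] P(2)] by blast
    then have "open (dom g \<inter> pfun g -` (- cball (pfun g x) \<delta>))" by (simp add: Int_commute)
    moreover have "{y. x \<in> dom g \<and> y \<in> dom g \<longrightarrow> dist (pfun g x) (pfun g y) \<le> \<delta>}
        = - (dom g \<inter> pfun g -` (- cball (pfun g x) \<delta>))"
      using True by auto
    ultimately show ?thesis by (simp add: closed_def)
  qed
  then show ?thesis unfolding eq by (intro closed_INT ballI)
qed

theorem mainTheorem13:
  fixes G :: "('a::metric_space) pmap set" and H :: "('b::metric_space) pmap set"
    and \<phi> :: "'a \<Rightarrow> 'b" and G1 :: "'a pmap set" and \<mu> :: "'a measure" and \<eta> :: real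
  assumes "compact (UNIV :: 'a set)" and "compact (UNIV :: 'b set)"
    and "fin_gen_pseudogroup G" and "fin_gen_pseudogroup H"
    and "strongly_isomorphic G H \<phi>"
    and "finite G1" and "generates G1 G"
    and "prob_space \<mu>" and "sets \<mu> = sets borel"
    and "\<eta> > 0" and "expansive_measure \<mu> G1 \<eta>"
  shows "\<exists>\<delta>>0. expansive_measure (distr \<mu> borel \<phi>)
                 (conj_pmap \<phi> (inv \<phi>) ` G1) \<delta>"
proof -
  define \<psi> where "\<psi> = inv \<phi>"
  define c where "c = conj_pmap \<phi> \<psi>"
  have hom: "homeomorphism UNIV UNIV \<phi> \<psi>" using assms(5) by (simp add: strongly_isomorphic_def \<psi>_def)
  then have inv1: "\<And>x. \<psi> (\<phi> x) = x" and inv2: "\<And>y. \<phi> (\<psi> y) = y"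
    and cphi: "continuous_on UNIV \<phi>" and cpsi: "continuous_on UNIV \<psi>"
    by (auto simp: homeomorphism_def)
  have "uniformly_continuous_on UNIV \<psi>"
    using compact_uniformly_continuous[OF cpsi assms(2)] .
  then obtain d where d0: "d > 0" and d': "\<forall>a\<in>UNIV. \<forall>b\<in>UNIV. dist b a < d \<longrightarrow> dist (\<psi> b) (\<psi> a) < \<eta>"
    using assms(10) unfolding uniformly_continuous_on_def by blast
  have d: "\<And>a b. dist a b < d \<Longrightarrow> dist (\<psi> a) (\<psi> b) < \<eta>" using d' by blast
  define \<delta> where "\<delta> = d / 2"
  have \<delta>0: "\<delta> > 0" and \<delta>d: "\<delta> < d" using d0 by (auto simp: \<delta>_def)
  have G1H: "G1 \<subseteq> Homeo" using assms(7) by (simp add: generates_def)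
  have G1G: "G1 \<subseteq> G"
  proof
    fix g assume g: "g \<in> G1"
    have "comp_list [g] = g" by (auto simp: pid_def map_comp_def split: option.splits)
    then have "open (dom g) \<and> g \<in> Homeo \<and> dom g \<subseteq> dom (comp_list [g]) \<and> (\<forall>y\<in>dom g. g y = comp_list [g] y)
       \<and> set [g] \<subseteq> G1 \<union> pinv ` G1"
      using g G1H by (auto simp: Homeo_def is_phomeo_def)
    then have "g \<in> generated_pg G1" unfolding generated_pg_def by blast
    then show "g \<in> G" using assms(7) by (simp add: generates_def)
  qed
  have HH: "H \<subseteq> Homeo" using assms(4) by (simp add: fin_gen_pseudogroup_def is_pseudogroup_def)
  have cG1: "c ` G1 \<subseteq> Homeo"
  proof
    fix h assume "h \<in> c ` G1"
    then obtain g where g: "g \<in> G1" "h = c g" by auto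
    then have "c g \<in> H" using assms(5) G1G G1H unfolding strongly_isomorphic_def c_def \<psi>_def by blast
    then show "h \<in> Homeo" using HH g by auto
  qed
  have Gn: "c g \<in> Gamma_n (c ` G1) n" if "g \<in> Gamma_n G1 n" for g n
  proof -
    from that obtain gs where gs: "g = comp_list gs" "length gs = n" "set gs \<subseteq> G1"
      by (auto simp: Gamma_n_def)
    have "c g = comp_list (map c gs)" using conj_comp_list[OF inv1 inv2] gs c_def by simp
    then show ?thesis using gs unfolding Gamma_n_def by (intro CollectI exI[of _ "map c gs"]) auto
  qed
  have incl: "\<phi> -` Phi (c ` G1) \<delta> y \<subseteq> Phi G1 \<eta> (\<psi> y)" for y
  proof
    fix z assume z: "z \<in> \<phi> -` Phi (c ` G1) \<delta> y"
    show "z \<in> Phi G1 \<eta> (\<psi> y)"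
      unfolding Phi_def
    proof (intro CollectI allI impI ballI)
      fix n g assume n: "1 \<le> n" and g: "g \<in> Gamma_n G1 n" and dm: "\<psi> y \<in> dom g \<and> z \<in> dom g"
      have "y \<in> dom (c g)" "\<phi> z \<in> dom (c g)" using dm by (auto simp: c_def conj_pmap_def inv1)
      moreover have "\<phi> z \<in> Phi (c ` G1) \<delta> y" using z by simp
      ultimately have "dist (pfun (c g) y) (pfun (c g) (\<phi> z)) \<le> \<delta>"
        using Gn[OF g] n unfolding Phi_def by blast
      moreover have "pfun (c g) y = \<phi> (pfun g (\<psi> y))" "pfun (c g) (\<phi> z) = \<phi> (pfun g z)"
        using dm by (auto simp: c_def conj_pmap_def pfun_def inv1)
      ultimately have "dist (\<phi> (pfun g (\<psi> y))) (\<phi> (pfun g z)) < d" using \<delta>d by simp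
      from d[OF this] show "dist (pfun g (\<psi> y)) (pfun g z) \<le> \<eta>" by (simp add: inv1)
    qed
  qed
  have sp: "space \<mu> = UNIV" using sets_eq_imp_space_eq[OF assms(9)] by simp
  have meas: "\<phi> \<in> measurable \<mu> borel"
    using measurable_cong_sets[OF assms(9) refl] borel_measurable_continuous_onI[OF cphi] by blast
  have "expansive_measure (distr \<mu> borel \<phi>) (c ` G1) \<delta>"
    unfolding expansive_measure_def
  proof
    fix y
    have cl: "Phi (c ` G1) \<delta> y \<in> sets borel" using closed_Phi[OF cG1] by auto
    have A: "\<phi> -` Phi (c ` G1) \<delta> y \<inter> space \<mu> \<in> sets \<mu>" using measurable_sets[OF meas cl] .
    have B: "Phi G1 \<eta> (\<psi> y) \<in> null_sets \<mu>" using assms(11) by (simp add: expansive_measure_def)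
    have C: "\<phi> -` Phi (c ` G1) \<delta> y \<inter> space \<mu> \<subseteq> Phi G1 \<eta> (\<psi> y)"
      using incl[of y] by blast
    have "\<phi> -` Phi (c ` G1) \<delta> y \<inter> space \<mu> \<in> null_sets \<mu>"
      by (rule null_sets_subset[OF B A C])
    then show "Phi (c ` G1) \<delta> y \<in> null_sets (distr \<mu> borel \<phi>)"
      using null_sets_distr_iff[OF meas] cl by blast
  qed
  then show ?thesis using \<delta>0 unfolding c_def \<psi>_def by blast
qed

end
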